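(* Let $p\in[2,3)$, $N\in\mathbb N$, $d,n\ge1$, let $f=(f_1,\dots,f_d)$ be vector fields on $\mathbb R^n$ of class $C^2_b$, let $\mathbf w=(\mathbf w_0,\dots,\mathbf w_N)$ be a time series in $\mathbb R^d$, and let $\mathbf x$ solve $\mathbf x_{k+1}=\mathbf x_k+\sum_{\mu=1}^df_\mu(\mathbf x_k)(\mathbf w^\mu_{k+1}-\mathbf w^\mu_k)$, $\mathbf x_0=\xi\in\mathbb R^n$. Define for $0\le k<l\le N$ \[ I_{k,l}\coloneqq\mathbf x_{k,l}-\sum_{\mu=1}^df_\mu(\mathbf x_k)\mathbf w^\mu_{k,l},\qquad J^\mu_{k,l}\coloneqq f_\mu(\mathbf x_l)-f_\mu(\mathbf x_k)-\sum_{\nu=1}^dDf_\mu(\mathbf x_k)f_\nu(\mathbf x_k)\mathbf w^\nu_{k,l}, \] where $\mathbf x_{k,l}=\mathbf x_l-\mathbf x_k$, $\mathbf w_{k,l}=\mathbf w_l-\mathbf w_k$. Then for all $0\le k<l\le N$, \[ \max_{\mu=1,\dots,d}\|J^\mu\|_{p/2;[k,l]}\le 2^{1-2/p}\|f\|_{C^2_b}\Big(\|I\|^{p/2}_{p/2;[k,l]}+\tfrac12\|\mathbf x\|^p_{p;[k,l]}\Big)^{2/p}. \]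
   Context: $\mathbb R^n$ carries a fixed norm and derivatives use operator norms; $\|f\|_{C^2_b}\coloneqq\max_\mu\max_{j=1,2}\|D^jf_\mu\|_\infty$. $\mathcal S_{k,l}$ is the set of increasing integer sequences $s=(s_0=k<\dots<s_{m+1}=l)$, $\#s=m$; for a time series $\|\mathbf x\|_{q;[k,l]}\coloneqq(\max_s\sum_{j=0}^{\#s}|\mathbf x_{s_{j+1}}-\mathbf x_{s_j}|^q)^{1/q}$, and for a triangular array $(\Xi_{k,l})_{k<l}$, $\|\Xi\|_{q;[k,l]}\coloneqq(\max_s\sum_{j=0}^{\#s}|\Xi_{s_j,s_{j+1}}|^q)^{1/q}$. *)

theory Defs
  imports "HOL-Analysis.Analysis"
begin

definition partitions :: "nat \<Rightarrow> nat \<Rightarrow> nat list set" where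
  "partitions k l = {s. 2 \<le> length s \<and> sorted_wrt (<) s \<and> hd s = k \<and> last s = l}"

definition var_sum :: "real \<Rightarrow> (nat \<Rightarrow> nat \<Rightarrow> 'b::real_normed_vector) \<Rightarrow> nat list \<Rightarrow> real" where
  "var_sum q F s = (\<Sum>j < length s - 1. norm (F (s ! j) (s ! Suc j)) powr q)"

definition pvar :: "real \<Rightarrow> (nat \<Rightarrow> nat \<Rightarrow> 'b::real_normed_vector) \<Rightarrow> nat \<Rightarrow> nat \<Rightarrow> real" where
  "pvar q F k l = (Max (var_sum q F ` partitions k l)) powr (1 / q)"

definition pvar_ts :: "real \<Rightarrow> (nat \<Rightarrow> 'b::real_normed_vector) \<Rightarrow> nat \<Rightarrow> nat \<Rightarrow> real" where
  "pvar_ts q x k l = pvar q (\<lambda>a b. x b - x a) k l"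

definition C2b_norm :: "nat \<Rightarrow> (nat \<Rightarrow> 'a::real_normed_vector \<Rightarrow> 'a \<Rightarrow>\<^sub>L 'a)
      \<Rightarrow> (nat \<Rightarrow> 'a \<Rightarrow> 'a \<Rightarrow>\<^sub>L ('a \<Rightarrow>\<^sub>L 'a)) \<Rightarrow> real" where
  "C2b_norm d Df D2f = Max ((\<lambda>\<mu>. max (SUP x. norm (Df \<mu> x)) (SUP x. norm (D2f \<mu> x))) ` {1..d})"

end

theory Submission
  imports Defs
begin

lemma powr_sum_le:
  fixes a b q :: real
  assumes "0 \<le> a" "0 \<le> b" "1 \<le> q"
  shows "(a + b) powr q \<le> 2 powr (q - 1) * (a powr q + b powr q)"
proof -
  have g1: "1 \<le> 2 powr (q - 1)" using assms(3) by (simp add: ge_one_powr_ge_zero)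
  consider "a = 0" | "b = 0" | "0 < a" "0 < b" using assms by linarith
  then show ?thesis
  proof cases
    case 1
    then show ?thesis using g1 by simp (metis mult_1 mult_right_mono powr_ge_zero)
  next
    case 2
    then show ?thesis using g1 by simp (metis mult_1 mult_right_mono powr_ge_zero)
  next
    case 3
    have c: "((1 - 1/2) *\<^sub>R a + (1/2) *\<^sub>R b) powr q \<le> (1 - 1/2) * a powr q + (1/2) * b powr q"
      using convex_onD[OF powr_convex[OF assms(3)], of "1/2" a b] 3 by simp
    have e: "(a + b) powr q = 2 powr q * ((a+b)/2) powr q"
      using 3 by (simp add: powr_mult[symmetric] add_divide_distrib)
    have t: "2 powr q = 2 * 2 powr (q - 1)"
      by (simp add: powr_diff)
    have "(a + b) powr q \<le> 2 powr q * ((a powr q + b powr q)/2)"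
      unfolding e using c by (intro mult_left_mono) (auto simp: field_simps)
    then show ?thesis unfolding t by simp
  qed
qed

lemma taylor2:
  fixes f :: "'a::real_normed_vector \<Rightarrow> 'a" and Df :: "'a \<Rightarrow> 'a \<Rightarrow>\<^sub>L 'a"
    and D2f :: "'a \<Rightarrow> 'a \<Rightarrow>\<^sub>L ('a \<Rightarrow>\<^sub>L 'a)"
  assumes Df: "\<And>y. (f has_derivative blinfun_apply (Df y)) (at y)"
    and D2f: "\<And>y. (Df has_derivative blinfun_apply (D2f y)) (at y)"
    and M: "\<And>y. norm (D2f y) \<le> M"
  shows "norm (f y - f x - Df x (y - x)) \<le> M / 2 * norm (y - x) ^ 2"
proof -
  define h where "h = y - x"
  have L: "norm (Df z - Df x) \<le> M * norm (z - x)" for z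
    by (rule differentiable_bound[of UNIV Df "\<lambda>y. blinfun_apply (D2f y)" M z x])
       (auto simp: D2f M norm_blinfun.rep_eq[symmetric])
  define g where "g t = f (x + t *\<^sub>R h) - t *\<^sub>R Df x h" for t
  define g' where "g' t = Df (x + t *\<^sub>R h) h - Df x h" for t
  have gd: "(g has_vector_derivative g' t) (at t)" for t
  proof -
    have "((\<lambda>t. x + t *\<^sub>R h) has_derivative (\<lambda>s. s *\<^sub>R h)) (at t)"
      by (auto intro!: derivative_eq_intros)
    from has_derivative_compose[OF this Df]
    have "((\<lambda>t. f (x + t *\<^sub>R h)) has_derivative (\<lambda>s. s *\<^sub>R Df (x + t *\<^sub>R h) h)) (at t)"
      by (simp add: blinfun.scaleR_right o_def)
    then show ?thesis unfolding g_def g'_def has_vector_derivative_def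
      by (auto intro!: derivative_eq_intros simp: algebra_simps)
  qed
  have gc: "continuous_on {0..1} g"
    using gd by (meson continuous_at_imp_continuous_on has_vector_derivative_continuous)
  define \<phi> where "\<phi> t = M * norm h ^ 2 * t^2 / 2" for t
  have pd: "(\<phi> has_vector_derivative (M * norm h ^ 2 * t)) (at t)" for t
    unfolding \<phi>_def has_vector_derivative_def
    by (auto intro!: derivative_eq_intros simp: algebra_simps)
  have pc: "continuous_on {0..1} \<phi>" unfolding \<phi>_def by (intro continuous_intros) auto
  have bnd: "norm (g' t) \<le> M * norm h ^ 2 * t" if "0 < t" for t
  proof -
    have "norm (g' t) = norm ((Df (x + t *\<^sub>R h) - Df x) h)"
      unfolding g'_def by (simp add: blinfun.diff_left)
    also have "\<dots> \<le> norm (Df (x + t *\<^sub>R h) - Df x) * norm h" by (rule norm_blinfun)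
    also have "\<dots> \<le> M * norm (t *\<^sub>R h) * norm h"
      using L[of "x + t *\<^sub>R h"] by (intro mult_right_mono) auto
    also have "\<dots> = M * norm h ^ 2 * t" using that by (simp add: power2_eq_square)
    finally show ?thesis .
  qed
  have "norm (g 1 - g 0) \<le> \<phi> 1 - \<phi> 0"
    by (rule differentiable_bound_general[OF zero_less_one gc pc gd pd]) (use bnd in auto)
  then show ?thesis unfolding g_def \<phi>_def h_def by (simp add: algebra_simps)
qed


lemma partitions_finite: "finite (partitions k l)"
proof (rule finite_subset)
  show "partitions k l \<subseteq> {xs. set xs \<subseteq> {..l} \<and> length xs \<le> Suc l}"
  proof
    fix s assume "s \<in> partitions k l"
    then have s: "2 \<le> length s" "sorted_wrt (<) s" "last s = l" by (auto simp: partitions_def)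
    have srt: "sorted s" using s(2) sorted_wrt_mono_rel[of s "(<)" "(\<le>)"] by auto
    have "set s \<subseteq> {..l}"
    proof
      fix y assume "y \<in> set s"
      then obtain i where i: "i < length s" "y = s ! i" by (metis in_set_conv_nth)
      have "s ! i \<le> s ! (length s - 1)" using srt i by (intro sorted_nth_mono) auto
      then show "y \<in> {..l}" using s(1,3) i last_conv_nth[of s] by (cases s) auto
    qed
    moreover have "distinct s" using s(2) by (simp add: strict_sorted_iff)
    ultimately have "length s \<le> Suc l"
      by (metis card_atMost card_mono distinct_card finite_atMost)
    with \<open>set s \<subseteq> {..l}\<close> show "s \<in> {xs. set xs \<subseteq> {..l} \<and> length xs \<le> Suc l}" by simp
  qed
  show "finite {xs. set xs \<subseteq> {..l} \<and> length xs \<le> Suc l}"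
    by (rule finite_lists_length_le) simp
qed

lemma partitions_ne: "k < l \<Longrightarrow> [k, l] \<in> partitions k l"
  by (simp add: partitions_def)

lemma var_sum_nonneg: "0 \<le> var_sum q F s"
  unfolding var_sum_def by (intro sum_nonneg) simp


theorem lemma5p7:
  fixes p :: real and N d :: nat
    and f :: "nat \<Rightarrow> 'a::real_normed_vector \<Rightarrow> 'a"
    and Df :: "nat \<Rightarrow> 'a \<Rightarrow> 'a \<Rightarrow>\<^sub>L 'a"
    and D2f :: "nat \<Rightarrow> 'a \<Rightarrow> 'a \<Rightarrow>\<^sub>L ('a \<Rightarrow>\<^sub>L 'a)"
    and w :: "nat \<Rightarrow> nat \<Rightarrow> real"
    and x :: "nat \<Rightarrow> 'a" and \<xi> :: 'a
    and k l :: nat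
  assumes hp: "2 \<le> p" "p < 3"
    and hd: "1 \<le> d"
    and Df: "\<And>\<mu> y. \<mu> \<in> {1..d} \<Longrightarrow> (f \<mu> has_derivative blinfun_apply (Df \<mu> y)) (at y)"
    and D2f: "\<And>\<mu> y. \<mu> \<in> {1..d} \<Longrightarrow> (Df \<mu> has_derivative blinfun_apply (D2f \<mu> y)) (at y)"
    and D2f_cont: "\<And>\<mu>. \<mu> \<in> {1..d} \<Longrightarrow> continuous_on UNIV (D2f \<mu>)"
    and Df_bdd: "\<And>\<mu>. \<mu> \<in> {1..d} \<Longrightarrow> bounded (range (Df \<mu>))"
    and D2f_bdd: "\<And>\<mu>. \<mu> \<in> {1..d} \<Longrightarrow> bounded (range (D2f \<mu>))"
    and x0: "x 0 = \<xi>"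
    and xrec: "\<And>j. j < N \<Longrightarrow>
       x (Suc j) = x j + (\<Sum>\<mu>=1..d. (w (Suc j) \<mu> - w j \<mu>) *\<^sub>R f \<mu> (x j))"
    and kl: "k < l" "l \<le> N"
  shows
   "(let I = (\<lambda>a b. x b - x a - (\<Sum>\<mu>=1..d. (w b \<mu> - w a \<mu>) *\<^sub>R f \<mu> (x a)));
         J = (\<lambda>\<mu> a b. f \<mu> (x b) - f \<mu> (x a)
                - (\<Sum>\<nu>=1..d. (w b \<nu> - w a \<nu>) *\<^sub>R Df \<mu> (x a) (f \<nu> (x a))))
     in Max ((\<lambda>\<mu>. pvar (p / 2) (J \<mu>) k l) ` {1..d})
        \<le> 2 powr (1 - 2 / p) * C2b_norm d Df D2f
           * (pvar (p / 2) I k l powr (p / 2) + 1 / 2 * pvar_ts p x k l powr p) powr (2 / p))"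
proof -
  define I where "I = (\<lambda>a b. x b - x a - (\<Sum>\<mu>=1..d. (w b \<mu> - w a \<mu>) *\<^sub>R f \<mu> (x a)))"
  define J where "J = (\<lambda>\<mu> a b. f \<mu> (x b) - f \<mu> (x a)
                - (\<Sum>\<nu>=1..d. (w b \<nu> - w a \<nu>) *\<^sub>R Df \<mu> (x a) (f \<nu> (x a))))"
  define C where "C = C2b_norm d Df D2f"
  define q where "q = p / 2"
  have q1: "1 \<le> q" using hp by (simp add: q_def)
  have CDf: "norm (Df \<mu> y) \<le> C" and CD2f: "norm (D2f \<mu> y) \<le> C" if "\<mu> \<in> {1..d}" for \<mu> y
  proof -
    have b1: "bdd_above ((\<lambda>y. norm (Df \<mu> y)) ` UNIV)"
      using Df_bdd[OF that] bdd_above_norm[of "range (Df \<mu>)"] by (simp add: image_image)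
    have b2: "bdd_above ((\<lambda>y. norm (D2f \<mu> y)) ` UNIV)"
      using D2f_bdd[OF that] bdd_above_norm[of "range (D2f \<mu>)"] by (simp add: image_image)
    have m: "max (SUP x. norm (Df \<mu> x)) (SUP x. norm (D2f \<mu> x)) \<le> C"
      unfolding C_def C2b_norm_def using that by (intro Max_ge) auto
    show "norm (Df \<mu> y) \<le> C" using cSUP_upper[OF _ b1, of y] m by simp
    show "norm (D2f \<mu> y) \<le> C" using cSUP_upper[OF _ b2, of y] m by simp
  qed
  have C0: "0 \<le> C" using CDf[of 1 undefined] hd by (meson atLeastAtMost_iff le_refl norm_ge_zero order_trans)
  define MI where "MI = Max (var_sum q I ` partitions k l)"
  define Mx where "Mx = Max (var_sum p (\<lambda>a b. x b - x a) ` partitions k l)"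
  define K where "K = C powr q * 2 powr (q - 1)"
  have fin: "finite (partitions k l)" by (rule partitions_finite)
  have ne: "partitions k l \<noteq> {}" using partitions_ne[OF kl(1)] by blast
  have MI0: "0 \<le> MI" unfolding MI_def using fin ne
    by (meson Max_ge_iff finite_imageI image_is_empty var_sum_nonneg imageI partitions_ne[OF kl(1)])
  have Mx0: "0 \<le> Mx" unfolding Mx_def using fin ne
    by (meson Max_ge_iff finite_imageI image_is_empty var_sum_nonneg imageI partitions_ne[OF kl(1)])
  have pw: "norm (J \<mu> a b) powr q \<le> K * (norm (I a b) powr q + 1/2 * norm (x b - x a) powr p)"
    if \<mu>: "\<mu> \<in> {1..d}" for \<mu> a b
  proof -
    define A where "A = norm (I a b)"
    define B where "B = norm (x b - x a)"
    have eq: "J \<mu> a b = (f \<mu> (x b) - f \<mu> (x a) - Df \<mu> (x a) (x b - x a)) + Df \<mu> (x a) (I a b)"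
      unfolding J_def I_def by (simp add: blinfun.diff_right blinfun.sum_right blinfun.scaleR_right)
    have t: "norm (f \<mu> (x b) - f \<mu> (x a) - Df \<mu> (x a) (x b - x a)) \<le> C / 2 * B ^ 2"
      unfolding B_def by (rule taylor2[OF Df[OF \<mu>] D2f[OF \<mu>] CD2f[OF \<mu>]])
    have u: "norm (Df \<mu> (x a) (I a b)) \<le> C * A"
      unfolding A_def by (rule order_trans[OF norm_blinfun]) (intro mult_right_mono CDf[OF \<mu>], simp)
    have j: "norm (J \<mu> a b) \<le> C * (A + 1/2 * B^2)"
      unfolding eq using t u norm_triangle_ineq[of "f \<mu> (x b) - f \<mu> (x a) - Df \<mu> (x a) (x b - x a)" "Df \<mu> (x a) (I a b)"]
      by (simp add: algebra_simps)
    have A0: "0 \<le> A" and B0: "0 \<le> B" by (auto simp: A_def B_def)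
    have "norm (J \<mu> a b) powr q \<le> (C * (A + 1/2 * B^2)) powr q"
      using j q1 by (intro powr_mono2) auto
    also have "\<dots> = C powr q * (A + 1/2 * B^2) powr q" using C0 A0 by (simp add: powr_mult)
    also have "\<dots> \<le> C powr q * (2 powr (q - 1) * (A powr q + (1/2 * B^2) powr q))"
      using A0 q1 by (intro mult_left_mono powr_sum_le) auto
    also have "(1/2 * B^2) powr q = (1/2) powr q * B powr p"
    proof -
      have "(1/2 * B^2) powr q = (1/2) powr q * (B powr 2) powr q"
        using B0 by (subst powr_mult) auto
      also have "(B powr 2) powr q = B powr p" by (simp add: powr_powr q_def)
      finally show ?thesis .
    qed
    also have "(1/2::real) powr q \<le> 1/2"
      using powr_mono'[OF q1, of "1/2::real"] by simp
    then have "C powr q * (2 powr (q - 1) * (A powr q + (1/2) powr q * B powr p))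
       \<le> C powr q * (2 powr (q - 1) * (A powr q + 1/2 * B powr p))"
      by (intro mult_left_mono add_left_mono mult_right_mono) auto
    finally show ?thesis unfolding K_def A_def B_def by (simp add: algebra_simps)
  qed
  have pv: "pvar q (J \<mu>) k l \<le> 2 powr (1 - 2 / p) * C * (MI + 1/2 * Mx) powr (2 / p)"
    if \<mu>: "\<mu> \<in> {1..d}" for \<mu>
  proof -
    have "Max (var_sum q (J \<mu>) ` partitions k l) \<le> K * (MI + 1/2 * Mx)"
    proof (subst Max_le_iff)
      show "\<forall>a\<in>var_sum q (J \<mu>) ` partitions k l. a \<le> K * (MI + 1 / 2 * Mx)"
      proof
        fix v assume "v \<in> var_sum q (J \<mu>) ` partitions k l"
        then obtain s where s: "s \<in> partitions k l" "v = var_sum q (J \<mu>) s" by blast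
        have "v \<le> (\<Sum>j<length s - 1. K * (norm (I (s!j) (s!Suc j)) powr q
                 + 1/2 * norm (x (s!Suc j) - x (s!j)) powr p))"
          unfolding s var_sum_def by (intro sum_mono pw[OF \<mu>])
        also have "\<dots> = K * (var_sum q I s + 1/2 * var_sum p (\<lambda>a b. x b - x a) s)"
          unfolding var_sum_def by (simp add: sum_distrib_left sum.distrib algebra_simps)
        also have "\<dots> \<le> K * (MI + 1/2 * Mx)"
          unfolding MI_def Mx_def using s fin
          by (intro mult_left_mono add_mono) (auto simp: K_def)
        finally show "v \<le> K * (MI + 1/2 * Mx)" .
      qed
    qed (use fin ne in auto)
    then have "pvar q (J \<mu>) k l \<le> (K * (MI + 1/2 * Mx)) powr (1 / q)"
      unfolding pvar_def using q1 by (intro powr_mono2) (auto intro!: Max_ge_iff[THEN iffD2] var_sum_nonneg simp: fin ne intro: bexI[OF _ partitions_ne[OF kl(1)]])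
    also have "\<dots> = C * 2 powr (1 - 2 / p) * (MI + 1/2 * Mx) powr (2 / p)"
    proof -
      have "(K * (MI + 1/2 * Mx)) powr (1 / q) = K powr (1/q) * (MI + 1/2 * Mx) powr (1 / q)"
        using MI0 Mx0 C0 by (simp add: powr_mult K_def)
      moreover have "K powr (1/q) = C * 2 powr (1 - 2/p)"
      proof -
        have ex: "(p / 2 - 1) * (2 / p) = 1 - 2 / p" using hp by (simp add: field_simps)
        have "K powr (1/q) = (C powr q) powr (1/q) * (2 powr (q - 1)) powr (1/q)"
          using C0 by (simp add: K_def powr_mult)
        also have "\<dots> = C * 2 powr (1 - 2/p)"
          using C0 q1 ex by (simp add: powr_powr q_def)
        finally show ?thesis .
      qed
      moreover have "1 / q = 2 / p" by (simp add: q_def)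
      ultimately show ?thesis by simp
    qed
    finally show ?thesis by (simp add: algebra_simps)
  qed
  have main: "Max ((\<lambda>\<mu>. pvar (p / 2) (J \<mu>) k l) ` {1..d})
        \<le> 2 powr (1 - 2 / p) * C
           * (pvar (p / 2) I k l powr (p / 2) + 1 / 2 * pvar_ts p x k l powr p) powr (2 / p)"
  proof -
    have e1: "pvar (p / 2) I k l powr (p / 2) = MI"
      using MI0 hp by (simp add: pvar_def MI_def q_def powr_powr)
    have e2: "pvar_ts p x k l powr p = Mx"
      using Mx0 hp by (simp add: pvar_ts_def pvar_def Mx_def powr_powr)
    show ?thesis unfolding e1 e2 using pv hd by (subst Max_le_iff) (auto simp: q_def)
  qed
  show ?thesis unfolding Let_def using main[unfolded I_def J_def C_def] .
qed

end
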